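(* Let $G$ be a graph on $[n]$. Then $NC_G$ is a lattice if and only if $G$ is crossing closed. Moreover, if $G$ is crossing closed and $H,H'\in NC_G$, then $H\wedge H'=H\cap H'$ (the bond whose edge set is $E(H)\cap E(H')$), which is also the meet of $H$ and $H'$ in $L_G$; thus $NC_G$ is a meet-subsemilattice of $L_G$.
   Context: All graphs are finite simple graphs with vertex set $[n]=\{1,\dots,n\}$; edges are written $ij$ with $i<j$. Two edges $a_1a_2$ and $b_1b_2$ cross if $a_1<b_1<a_2<b_2$ or $b_1<a_1<b_2<a_2$. A spanning subgraph is identified with its edge set. A bond of $G$ is a spanning subgraph each of whose connected components is an induced subgraph of $G$. For a bond $H$, $\pi(H)$ is the set partition of $[n]$ whose blocks are the vertex sets of the connected components of $H$. A set partition is crossing if there are distinct blocks $B,B'$ and $a,c\in B$, $b,d\in B'$ with $a<b<c<d$, and noncrossing otherwise; a bond $H$ is noncrossing if $\pi(H)$ is. $L_G$ is the poset (bond lattice) of all bonds of $G$ ordered by inclusion of edge sets, and $NC_G$ is its subposet of noncrossing bonds. Two crossing edges $e,f$ are crossing closed if among all induced connected subgraphs of $G$ containing both $e$ and $f$ there is a unique one minimal with respect to containment; $G$ is crossing closed if every pair of crossing edges is crossing closed. *)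

theory Defs
  imports Main
begin

text \<open>A graph on [n] = {1..n} is given by its edge set E of pairs (i,j) with i < j.
  A spanning subgraph is identified with its edge set H.\<close>

definition graph_on :: "nat \<Rightarrow> (nat \<times> nat) set \<Rightarrow> bool" where
  "graph_on n E \<longleftrightarrow> (\<forall>(i,j)\<in>E. 1 \<le> i \<and> i < j \<and> j \<le> n)"

definition adj :: "(nat \<times> nat) set \<Rightarrow> nat \<Rightarrow> nat \<Rightarrow> bool" where
  "adj H u v \<longleftrightarrow> (u,v) \<in> H \<or> (v,u) \<in> H"

definition conn :: "(nat \<times> nat) set \<Rightarrow> nat \<Rightarrow> nat \<Rightarrow> bool" where
  "conn H = (adj H)\<^sup>*\<^sup>*"

definition component :: "nat \<Rightarrow> (nat \<times> nat) set \<Rightarrow> nat \<Rightarrow> nat set" where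
  "component n H v = {u \<in> {1..n}. conn H v u}"

definition part :: "nat \<Rightarrow> (nat \<times> nat) set \<Rightarrow> nat set set" where
  "part n H = component n H ` {1..n}"

definition is_bond :: "nat \<Rightarrow> (nat \<times> nat) set \<Rightarrow> (nat \<times> nat) set \<Rightarrow> bool" where
  "is_bond n E H \<longleftrightarrow> H \<subseteq> E \<and>
     (\<forall>C \<in> part n H. \<forall>(i,j) \<in> E. i \<in> C \<and> j \<in> C \<longrightarrow> (i,j) \<in> H)"

definition crossing_partition :: "nat set set \<Rightarrow> bool" where
  "crossing_partition P \<longleftrightarrow> (\<exists>B\<in>P. \<exists>B'\<in>P. B \<noteq> B' \<and>
     (\<exists>a c b d. a \<in> B \<and> c \<in> B \<and> b \<in> B' \<and> d \<in> B' \<and> a < b \<and> b < c \<and> c < d))"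

text \<open>bond lattice L_G (as a set of edge sets, ordered by inclusion)\<close>
definition bonds :: "nat \<Rightarrow> (nat \<times> nat) set \<Rightarrow> (nat \<times> nat) set set" where
  "bonds n E = {H. is_bond n E H}"

definition nc_bonds :: "nat \<Rightarrow> (nat \<times> nat) set \<Rightarrow> (nat \<times> nat) set set" where
  "nc_bonds n E = {H. is_bond n E H \<and> \<not> crossing_partition (part n H)}"

definition is_glb :: "'a set set \<Rightarrow> 'a set \<Rightarrow> 'a set \<Rightarrow> 'a set \<Rightarrow> bool" where
  "is_glb S x y z \<longleftrightarrow> z \<in> S \<and> z \<subseteq> x \<and> z \<subseteq> y \<and> (\<forall>w\<in>S. w \<subseteq> x \<and> w \<subseteq> y \<longrightarrow> w \<subseteq> z)"

definition is_lub :: "'a set set \<Rightarrow> 'a set \<Rightarrow> 'a set \<Rightarrow> 'a set \<Rightarrow> bool" where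
  "is_lub S x y z \<longleftrightarrow> z \<in> S \<and> x \<subseteq> z \<and> y \<subseteq> z \<and> (\<forall>w\<in>S. x \<subseteq> w \<and> y \<subseteq> w \<longrightarrow> z \<subseteq> w)"

definition is_lattice :: "'a set set \<Rightarrow> bool" where
  "is_lattice S \<longleftrightarrow> (\<forall>x\<in>S. \<forall>y\<in>S. (\<exists>z. is_glb S x y z) \<and> (\<exists>z. is_lub S x y z))"

definition edges_cross :: "nat \<times> nat \<Rightarrow> nat \<times> nat \<Rightarrow> bool" where
  "edges_cross e f \<longleftrightarrow> (case e of (a1,a2) \<Rightarrow> case f of (b1,b2) \<Rightarrow>
      (a1 < b1 \<and> b1 < a2 \<and> a2 < b2) \<or> (b1 < a1 \<and> a1 < b2 \<and> b2 < a2))"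

definition induced_connected :: "nat \<Rightarrow> (nat \<times> nat) set \<Rightarrow> nat set \<Rightarrow> bool" where
  "induced_connected n E S \<longleftrightarrow> S \<noteq> {} \<and> S \<subseteq> {1..n} \<and>
     (\<forall>u\<in>S. \<forall>v\<in>S. conn {(i,j) \<in> E. i \<in> S \<and> j \<in> S} u v)"

text \<open>vertex sets of induced connected subgraphs of G containing edges e and f
  (induced subgraphs are ordered by containment exactly as their vertex sets)\<close>
definition conn_containing :: "nat \<Rightarrow> (nat \<times> nat) set \<Rightarrow> nat \<times> nat \<Rightarrow> nat \<times> nat \<Rightarrow> nat set set" where
  "conn_containing n E e f = {S. induced_connected n E S \<and>
      fst e \<in> S \<and> snd e \<in> S \<and> fst f \<in> S \<and> snd f \<in> S}"

definition crossing_closed_pair :: "nat \<Rightarrow> (nat \<times> nat) set \<Rightarrow> nat \<times> nat \<Rightarrow> nat \<times> nat \<Rightarrow> bool" where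
  "crossing_closed_pair n E e f \<longleftrightarrow>
     (\<exists>!S. S \<in> conn_containing n E e f \<and> (\<forall>T \<in> conn_containing n E e f. T \<subseteq> S \<longrightarrow> T = S))"

definition crossing_closed :: "nat \<Rightarrow> (nat \<times> nat) set \<Rightarrow> bool" where
  "crossing_closed n E \<longleftrightarrow>
     (\<forall>e\<in>E. \<forall>f\<in>E. edges_cross e f \<longrightarrow> crossing_closed_pair n E e f)"

end

theory Submission
  imports Defs
begin

lemma adj_sym: "adj H u v = adj H v u" unfolding adj_def by auto

lemma conn_refl[simp]: "conn H u u" unfolding conn_def by simp

lemma conn_sym: assumes "conn H u v" shows "conn H v u"
  using assms unfolding conn_def
proof (induction rule: rtranclp_induct)
  case base then show ?case by simp
next
  case (step y z)
  then show ?case by (metis adj_sym converse_rtranclp_into_rtranclp)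
qed

lemma conn_trans: "conn H u v \<Longrightarrow> conn H v w \<Longrightarrow> conn H u w"
  unfolding conn_def by (rule rtranclp_trans)

lemma conn_edge: "(u,v) \<in> H \<Longrightarrow> conn H u v"
  unfolding conn_def adj_def by auto

lemma conn_edge': "(u,v) \<in> H \<Longrightarrow> conn H v u"
  using conn_edge conn_sym by metis

lemma conn_adj: "adj H u v \<Longrightarrow> conn H u v"
  unfolding conn_def by auto

lemma conn_mono: assumes "K \<subseteq> H" "conn K u v" shows "conn H u v"
  using assms(2) unfolding conn_def
proof (induction rule: rtranclp_induct)
  case base then show ?case by simp
next
  case (step y z)
  then have "adj H y z" using assms(1) unfolding adj_def by auto
  then show ?case using step by (meson rtranclp.rtrancl_into_rtrancl)
qed

lemma conn_range:
  assumes "graph_on n E" "H \<subseteq> E" "conn H u v"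
  shows "u = v \<or> (u \<in> {1..n} \<and> v \<in> {1..n})"
  using assms(3) unfolding conn_def
proof (induction rule: rtranclp_induct)
  case base then show ?case by simp
next
  case (step y z)
  then have "y \<in> {1..n} \<and> z \<in> {1..n}" using assms(1,2) unfolding adj_def graph_on_def by fastforce
  then show ?case using step by auto
qed

lemma step_change:
  assumes "r\<^sup>*\<^sup>* u v" "P u" "\<not> P v"
  shows "\<exists>x y. r\<^sup>*\<^sup>* u x \<and> r x y \<and> P x \<and> \<not> P y"
  using assms
proof (induction rule: rtranclp_induct)
  case base then show ?case by simp
next
  case (step y z)
  then show ?case by (cases "P y") auto
qed

lemma bond_iff:
  assumes "graph_on n E"
  shows "is_bond n E H \<longleftrightarrow> H \<subseteq> E \<and> (\<forall>i j. (i,j)\<in>E \<longrightarrow> conn H i j \<longrightarrow> (i,j)\<in>H)"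
proof
  assume b: "is_bond n E H"
  show "H \<subseteq> E \<and> (\<forall>i j. (i,j)\<in>E \<longrightarrow> conn H i j \<longrightarrow> (i,j)\<in>H)"
  proof (intro conjI allI impI)
    show "H \<subseteq> E" using b unfolding is_bond_def by auto
    fix i j assume ij: "(i,j) \<in> E" "conn H i j"
    then have r: "i \<in> {1..n}" "j \<in> {1..n}" using assms unfolding graph_on_def by auto
    have "component n H i \<in> part n H" unfolding part_def using r by auto
    moreover have "i \<in> component n H i" "j \<in> component n H i"
      unfolding component_def using r ij by auto
    ultimately show "(i,j) \<in> H" using b ij unfolding is_bond_def by blast
  qed
next
  assume h: "H \<subseteq> E \<and> (\<forall>i j. (i,j)\<in>E \<longrightarrow> conn H i j \<longrightarrow> (i,j)\<in>H)"
  show "is_bond n E H" unfolding is_bond_def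
  proof (intro conjI ballI)
    show "H \<subseteq> E" using h by auto
    fix C x assume C: "C \<in> part n H" and x: "x \<in> E"
    obtain v where v: "C = component n H v" using C unfolding part_def by auto
    show "case x of (i, j) \<Rightarrow> i \<in> C \<and> j \<in> C \<longrightarrow> (i, j) \<in> H"
    proof (cases x)
      case (Pair i j)
      { assume "i \<in> C" "j \<in> C"
        then have "conn H v i" "conn H v j" using v unfolding component_def by auto
        then have "conn H i j" using conn_sym conn_trans by metis
        then have "(i,j) \<in> H" using h x Pair by auto }
      then show ?thesis using Pair by auto
    qed
  qed
qed

lemma crossing_partitionI:
  assumes "B \<in> P" "B' \<in> P" "B \<noteq> B'" "a \<in> B" "c \<in> B" "b \<in> B'" "d \<in> B'" "a < b" "b < c" "c < d"
  shows "crossing_partition P"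
  unfolding crossing_partition_def
  apply (rule bexI[OF _ assms(1)], rule bexI[OF _ assms(2)])
  using assms(3-10) by blast

lemma cross_intro:
  assumes "a \<in> {1..n}" "b \<in> {1..n}" "c \<in> {1..n}" "d \<in> {1..n}" "a < b" "b < c" "c < d"
    "conn H a c" "conn H b d" "\<not> conn H a b"
  shows "crossing_partition (part n H)"
proof -
  have B: "component n H a \<in> part n H" "component n H b \<in> part n H" unfolding part_def using assms by auto
  have "b \<in> component n H b" "b \<notin> component n H a" unfolding component_def using assms by auto
  then have ne: "component n H a \<noteq> component n H b" by auto
  have m: "a \<in> component n H a" "c \<in> component n H a" "b \<in> component n H b" "d \<in> component n H b"
    unfolding component_def using assms by auto
  show ?thesis by (rule crossing_partitionI[OF B ne m assms(5-7)])
qed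

lemma cross_elim:
  assumes "crossing_partition (part n H)"
  obtains a b c d where "a \<in> {1..n}" "b \<in> {1..n}" "c \<in> {1..n}" "d \<in> {1..n}" "a < b" "b < c" "c < d"
    "conn H a c" "conn H b d" "\<not> conn H a b"
proof -
  obtain B B' a c b d where BB: "B \<in> part n H" "B' \<in> part n H" "B \<noteq> B'"
    "a \<in> B" "c \<in> B" "b \<in> B'" "d \<in> B'" "a < b" "b < c" "c < d"
    using assms unfolding crossing_partition_def by blast
  obtain v w where vw: "B = component n H v" "B' = component n H w" using BB unfolding part_def by auto
  have r: "a \<in> {1..n}" "b \<in> {1..n}" "c \<in> {1..n}" "d \<in> {1..n}" using BB vw unfolding component_def by auto
  have cv: "conn H v a" "conn H v c" "conn H w b" "conn H w d" using BB vw unfolding component_def by auto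
  then have ac: "conn H a c" "conn H b d" using conn_sym conn_trans by metis+
  have nab: "\<not> conn H a b"
  proof
    assume "conn H a b"
    then have "conn H v w" using cv conn_sym conn_trans by metis
    then have "\<And>x. conn H v x = conn H w x" using conn_sym conn_trans by metis
    then have "B = B'" using vw unfolding component_def by auto
    then show False using BB by auto
  qed
  show ?thesis using that r BB ac nab by blast
qed
lemma adj_edge:
  assumes "adj K x y"
  obtains x1 x2 where "(x1,x2) \<in> K" "(x1 = x \<and> x2 = y) \<or> (x1 = y \<and> x2 = x)"
  using assms unfolding adj_def by auto

lemma cross_paths:
  assumes ord: "\<And>i j. (i,j)\<in>K \<Longrightarrow> i<j"
    and ac: "conn K a c" and bd: "conn K b d" and nab: "\<not> conn K a b"
    and o: "a<b" "b<c" "c<d"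
  shows "\<exists>x1 x2 y1 y2. (x1,x2)\<in>K \<and> (y1,y2)\<in>K \<and> edges_cross (x1,x2) (y1,y2)
           \<and> conn K a x1 \<and> conn K b y1"
proof -
  obtain x y where xy: "conn K a x" "adj K x y" "\<not>(b<x \<and> x<d)" "b<y \<and> y<d"
    using step_change[of "adj K" a c "\<lambda>v. \<not>(b<v \<and> v<d)"] ac o unfolding conn_def by auto
  have ay: "conn K a y" using xy conn_adj conn_trans by metis
  have nad: "\<not> conn K a d" using nab bd conn_sym conn_trans by metis
  have nb: "x \<noteq> b" "y \<noteq> b" "x \<noteq> d" "y \<noteq> d" using xy ay nab nad by auto
  obtain x1 x2 where x12: "(x1,x2) \<in> K" "(x1 = x \<and> x2 = y) \<or> (x1 = y \<and> x2 = x)"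
    using adj_edge[OF xy(2)] by blast
  have xo: "x1 < x2" using ord x12 by auto
  have ax: "conn K a x1" "conn K a x2" using x12 xy ay by auto
  define Q where "Q v \<longleftrightarrow> x1 < v \<and> v < x2" for v
  have sep: "Q b \<noteq> Q d" unfolding Q_def using x12 xo nb xy o by auto
  obtain u w where uw: "conn K b u" "adj K u w" "Q u = Q b" "Q w \<noteq> Q b"
    using step_change[of "adj K" b d "\<lambda>v. Q v = Q b"] bd sep unfolding conn_def by auto
  have bw: "conn K b w" using uw conn_adj conn_trans by metis
  obtain y1 y2 where y12: "(y1,y2) \<in> K" "(y1 = u \<and> y2 = w) \<or> (y1 = w \<and> y2 = u)"
    using adj_edge[OF uw(2)] by blast
  have yo: "y1 < y2" using ord y12 by auto
  have by1: "conn K b y1" "conn K b y2" using y12 uw bw by auto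
  have dist: "y1 \<noteq> x1" "y1 \<noteq> x2" "y2 \<noteq> x1" "y2 \<noteq> x2"
    using by1 ax nab conn_sym conn_trans by metis+
  have "Q y1 \<noteq> Q y2" using y12 uw by auto
  then have "edges_cross (x1,x2) (y1,y2)"
    unfolding edges_cross_def Q_def using xo yo dist by auto
  then show ?thesis using x12 y12 ax by1 by blast
qed

lemma exists_minimal:
  assumes "T \<in> F" "\<And>X. X \<in> F \<Longrightarrow> finite X"
  shows "\<exists>M\<in>F. M \<subseteq> T \<and> (\<forall>X\<in>F. X \<subseteq> M \<longrightarrow> X = M)"
  using assms
proof (induction "card T" arbitrary: T rule: less_induct)
  case less
  show ?case
  proof (cases "\<forall>X\<in>F. X \<subseteq> T \<longrightarrow> X = T")
    case True then show ?thesis using less by blast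
  next
    case False
    then obtain X where X: "X \<in> F" "X \<subset> T" by blast
    then have "card X < card T" using less psubset_card_mono by blast
    then obtain M where M: "M\<in>F" "M \<subseteq> X" "\<forall>Y\<in>F. Y \<subseteq> M \<longrightarrow> Y = M" using less X by blast
    have "M \<subseteq> T" using M(2) X(2) by auto
    then show ?thesis using M(1,3) by blast
  qed
qed

lemma comp_induced:
  assumes g: "graph_on n E" and HE: "H \<subseteq> E" and v: "v \<in> {1..n}"
  shows "induced_connected n E (component n H v)"
proof -
  define C where "C = component n H v"
  define R where "R = {(i,j) \<in> E. i \<in> C \<and> j \<in> C}"
  have key: "conn R v u" if "conn H v u" for u
    using that unfolding conn_def
  proof (induction rule: rtranclp_induct)
    case base then show ?case by simp
  next
    case (step y z)
    have yz: "y \<in> {1..n}" "z \<in> {1..n}" using step(2) g HE unfolding adj_def graph_on_def by fastforce+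
    have "conn H v z" using step(1,2) unfolding conn_def by auto
    then have "y \<in> C" "z \<in> C" using step(1) yz unfolding C_def component_def conn_def by auto
    then have "adj R y z" using step(2) HE unfolding R_def adj_def by auto
    then show ?case using step(3) by (meson rtranclp.rtrancl_into_rtrancl)
  qed
  have "v \<in> C" unfolding C_def component_def using v by auto
  moreover have "C \<subseteq> {1..n}" unfolding C_def component_def by auto
  moreover have "conn R u w" if "u \<in> C" "w \<in> C" for u w
  proof -
    have "conn H v u" "conn H v w" using that unfolding C_def component_def by auto
    then have "conn R v u" "conn R v w" using key by auto
    then show ?thesis using conn_sym conn_trans by metis
  qed
  ultimately show ?thesis unfolding induced_connected_def C_def[symmetric] R_def by auto
qed

lemma conn_W:
  assumes "conn {(i,j) \<in> E. i \<in> S \<and> j \<in> S} u v"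
  shows "u = v \<or> (u \<in> S \<and> v \<in> S)"
  using assms unfolding conn_def
proof (induction rule: rtranclp_induct)
  case base then show ?case by simp
next
  case (step y z)
  then show ?case unfolding adj_def by auto
qed
lemma glb_inter: "x \<inter> y \<in> S \<Longrightarrow> is_glb S x y (x \<inter> y)"
  unfolding is_glb_def by auto

lemma bond_inter:
  assumes g: "graph_on n E" "is_bond n E H" "is_bond n E H'"
  shows "is_bond n E (H \<inter> H')"
proof -
  have "conn H i j" "conn H' i j" if "conn (H \<inter> H') i j" for i j
    using that conn_mono[of "H \<inter> H'"] by auto
  moreover have "H \<subseteq> E \<and> (\<forall>i j. (i,j)\<in>E \<longrightarrow> conn H i j \<longrightarrow> (i,j)\<in>H)"
    "H' \<subseteq> E \<and> (\<forall>i j. (i,j)\<in>E \<longrightarrow> conn H' i j \<longrightarrow> (i,j)\<in>H')"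
    using assms(2,3) bond_iff[OF g(1)] by auto
  ultimately show ?thesis unfolding bond_iff[OF g(1)] by auto
qed

lemma ord_of:
  assumes "graph_on n E" "K \<subseteq> E" "(i,j) \<in> K" shows "i < j" "i \<in> {1..n}" "j \<in> {1..n}"
proof -
  have "(i,j) \<in> E" using assms by auto
  then show "i < j" "i \<in> {1..n}" "j \<in> {1..n}" using assms(1) unfolding graph_on_def by fastforce+
qed

lemma nc_inter:
  assumes g: "graph_on n E" and cc: "crossing_closed n E"
    and H: "H \<in> nc_bonds n E" and H': "H' \<in> nc_bonds n E"
  shows "H \<inter> H' \<in> nc_bonds n E"
proof -
  define K where "K = H \<inter> H'"
  have bH: "is_bond n E H" "is_bond n E H'" using H H' unfolding nc_bonds_def by auto
  have ncH: "\<not> crossing_partition (part n H)" "\<not> crossing_partition (part n H')"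
    using H H' unfolding nc_bonds_def by auto
  have HE: "H \<subseteq> E" "H' \<subseteq> E" using bH bond_iff[OF g] by auto
  have bK: "is_bond n E K" unfolding K_def using bond_inter[OF g bH] .
  have KE: "K \<subseteq> E" using HE unfolding K_def by auto
  have KH: "K \<subseteq> H" "K \<subseteq> H'" unfolding K_def by auto
  have "\<not> crossing_partition (part n K)"
  proof
    assume "crossing_partition (part n K)"
    then obtain a b c d where abcd: "a \<in> {1..n}" "b \<in> {1..n}" "c \<in> {1..n}" "d \<in> {1..n}"
      "a < b" "b < c" "c < d" "conn K a c" "conn K b d" "\<not> conn K a b"
      by (rule cross_elim)
    obtain x1 x2 y1 y2 where e: "(x1,x2)\<in>K" "(y1,y2)\<in>K" "edges_cross (x1,x2) (y1,y2)"
      "conn K a x1" "conn K b y1"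
      using cross_paths[of K a c b d] abcd ord_of[OF g KE] by metis
    have abH: "conn H a b" "conn H' a b"
    proof -
      show "conn H a b"
      proof (rule ccontr)
        assume "\<not> conn H a b"
        then have "crossing_partition (part n H)"
          using cross_intro[of a n b c d H] abcd conn_mono[OF KH(1)] by blast
        then show False using ncH by auto
      qed
      show "conn H' a b"
      proof (rule ccontr)
        assume "\<not> conn H' a b"
        then have "crossing_partition (part n H')"
          using cross_intro[of a n b c d H'] abcd conn_mono[OF KH(2)] by blast
        then show False using ncH by auto
      qed
    qed
    have ccp: "crossing_closed_pair n E (x1,x2) (y1,y2)" using cc e KE unfolding crossing_closed_def by auto
    then obtain S where S: "S \<in> conn_containing n E (x1,x2) (y1,y2)"
      "\<forall>T\<in>conn_containing n E (x1,x2) (y1,y2). T \<subseteq> S \<longrightarrow> T = S"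
      and Su: "\<And>S'. S' \<in> conn_containing n E (x1,x2) (y1,y2) \<Longrightarrow>
          (\<forall>T\<in>conn_containing n E (x1,x2) (y1,y2). T \<subseteq> S' \<longrightarrow> T = S') \<Longrightarrow> S' = S"
      unfolding crossing_closed_pair_def by (elim ex1E) blast
    have fin: "finite X" if "X \<in> conn_containing n E (x1,x2) (y1,y2)" for X
    proof -
      have "X \<subseteq> {1..n}" using that unfolding conn_containing_def induced_connected_def by blast
      then show "finite X" using finite_subset by blast
    qed
    have sub: "S \<subseteq> component n G a" if G: "G \<subseteq> E" "K \<subseteq> G" "conn G a b" for G
    proof -
      have r: "x1 \<in> {1..n}" "x2 \<in> {1..n}" "y1 \<in> {1..n}" "y2 \<in> {1..n}"
        using ord_of[OF g KE e(1)] ord_of[OF g KE e(2)] by auto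
      have c: "conn G a x1" "conn G a x2" "conn G a y1" "conn G a y2"
      proof -
        have k: "conn K a x1" "conn K a x2" "conn K b y1" "conn K b y2"
          using e conn_edge[of x1 x2 K] conn_edge[of y1 y2 K] conn_trans by blast+
        have "conn G a x1" "conn G a x2" "conn G b y1" "conn G b y2" using k conn_mono[OF G(2)] by auto
        then show "conn G a x1" "conn G a x2" "conn G a y1" "conn G a y2" using G(3) conn_trans by blast+
      qed
      have "component n G a \<in> conn_containing n E (x1,x2) (y1,y2)"
        unfolding conn_containing_def using comp_induced[OF g G(1) abcd(1)] r c
        unfolding component_def by auto
      then obtain M where "M \<in> conn_containing n E (x1,x2) (y1,y2)" "M \<subseteq> component n G a"
        "\<forall>X\<in>conn_containing n E (x1,x2) (y1,y2). X \<subseteq> M \<longrightarrow> X = M"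
        using exists_minimal[OF _ fin] by blast
      then show ?thesis using Su by metis
    qed
    have S1: "S \<subseteq> component n H a" using sub[of H] HE KH abH by auto
    have S2: "S \<subseteq> component n H' a" using sub[of H'] HE KH abH by auto
    define R where "R = {(i,j) \<in> E. i \<in> S \<and> j \<in> S}"
    have RK: "R \<subseteq> K"
    proof
      fix p assume p: "p \<in> R"
      obtain i j where ij: "p = (i,j)" by fastforce
      have "i \<in> component n H a" "j \<in> component n H a" "i \<in> component n H' a" "j \<in> component n H' a"
        using p ij S1 S2 unfolding R_def by auto
      then have "conn H a i" "conn H a j" "conn H' a i" "conn H' a j" unfolding component_def by auto
      then have "conn H i j" "conn H' i j" by (meson conn_sym conn_trans)+
      then have "(i,j) \<in> H" "(i,j) \<in> H'" using bH bond_iff[OF g] p ij unfolding R_def by auto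
      then show "p \<in> K" using ij unfolding K_def by auto
    qed
    have "x1 \<in> S" "y1 \<in> S" "induced_connected n E S" using S(1) unfolding conn_containing_def by auto
    then have "conn R x1 y1" unfolding induced_connected_def R_def by auto
    then have "conn K x1 y1" using conn_mono[OF RK] by auto
    then have "conn K a b" using e conn_sym conn_trans by metis
    then show False using abcd by auto
  qed
  then show ?thesis using bK unfolding nc_bonds_def K_def by auto
qed
lemma E_nc:
  assumes g: "graph_on n E" and cc: "crossing_closed n E"
  shows "E \<in> nc_bonds n E"
proof -
  have bE: "is_bond n E E" using bond_iff[OF g] by auto
  have "\<not> crossing_partition (part n E)"
  proof
    assume "crossing_partition (part n E)"
    then obtain a b c d where abcd: "a \<in> {1..n}" "b \<in> {1..n}" "c \<in> {1..n}" "d \<in> {1..n}"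
      "a < b" "b < c" "c < d" "conn E a c" "conn E b d" "\<not> conn E a b"
      by (rule cross_elim)
    obtain x1 x2 y1 y2 where e: "(x1,x2)\<in>E" "(y1,y2)\<in>E" "edges_cross (x1,x2) (y1,y2)"
      "conn E a x1" "conn E b y1"
      using cross_paths[of E a c b d] abcd ord_of[OF g, of E] by blast
    have "crossing_closed_pair n E (x1,x2) (y1,y2)" using cc e unfolding crossing_closed_def by auto
    then obtain S where S: "S \<in> conn_containing n E (x1,x2) (y1,y2)"
      unfolding crossing_closed_pair_def by blast
    have "x1 \<in> S" "y1 \<in> S" "induced_connected n E S" using S unfolding conn_containing_def by auto
    then have "conn {(i,j) \<in> E. i \<in> S \<and> j \<in> S} x1 y1" unfolding induced_connected_def by auto
    then have "conn E x1 y1" using conn_mono[of "{(i,j) \<in> E. i \<in> S \<and> j \<in> S}" E] by auto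
    then have "conn E a b" using e conn_sym conn_trans by metis
    then show False using abcd by auto
  qed
  then show ?thesis using bE unfolding nc_bonds_def by auto
qed

lemma finite_E: "graph_on n E \<Longrightarrow> finite E"
proof -
  assume g: "graph_on n E"
  have "E \<subseteq> {1..n} \<times> {1..n}" using g unfolding graph_on_def by fastforce
  then show "finite E" using finite_subset by blast
qed

lemma inter_closed:
  assumes "finite U" "U \<noteq> {}" "U \<subseteq> N" "\<And>A B. A \<in> N \<Longrightarrow> B \<in> N \<Longrightarrow> A \<inter> B \<in> N"
  shows "\<Inter>U \<in> N"
  using assms(1,2,3)
proof (induction U rule: finite_ne_induct)
  case (singleton x) then show ?case by auto
next
  case (insert x F) then show ?case using assms(4) by auto
qed

lemma cc_lattice:
  assumes g: "graph_on n E" and cc: "crossing_closed n E"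
  shows "is_lattice (nc_bonds n E)"
  unfolding is_lattice_def
proof (intro ballI conjI)
  fix H H' assume H: "H \<in> nc_bonds n E" and H': "H' \<in> nc_bonds n E"
  show "\<exists>z. is_glb (nc_bonds n E) H H' z" using glb_inter nc_inter[OF g cc H H'] by blast
  define U where "U = {W \<in> nc_bonds n E. H \<subseteq> W \<and> H' \<subseteq> W}"
  have HE: "H \<subseteq> E" "H' \<subseteq> E" using H H' bond_iff[OF g] unfolding nc_bonds_def by auto
  have EU: "E \<in> U" unfolding U_def using E_nc[OF g cc] HE by auto
  have "U \<subseteq> Pow E" unfolding U_def nc_bonds_def using bond_iff[OF g] by auto
  then have fU: "finite U" using finite_E[OF g] finite_Pow_iff finite_subset by metis
  have "\<Inter>U \<in> nc_bonds n E"
    by (rule inter_closed[OF fU]) (use EU U_def nc_inter[OF g cc] in auto)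
  then have "is_lub (nc_bonds n E) H H' (\<Inter>U)" unfolding is_lub_def U_def by auto
  then show "\<exists>z. is_lub (nc_bonds n E) H H' z" by blast
qed
lemma conn_single:
  assumes "conn {(a1,a2)} u v"
  shows "u = v \<or> (u \<in> {a1,a2} \<and> v \<in> {a1,a2})"
  using assms unfolding conn_def
proof (induction rule: rtranclp_induct)
  case base then show ?case by simp
next
  case (step y z) then show ?case unfolding adj_def by auto
qed

lemma single_nc:
  assumes g: "graph_on n E" and e: "(a1,a2) \<in> E"
  shows "{(a1,a2)} \<in> nc_bonds n E"
proof -
  have o: "a1 < a2" using ord_of[OF g _ e] by auto
  have "is_bond n E {(a1,a2)}"
    unfolding bond_iff[OF g]
  proof (intro conjI allI impI)
    show "{(a1,a2)} \<subseteq> E" using e by auto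
    fix i j assume ij: "(i,j) \<in> E" "conn {(a1,a2)} i j"
    have "i < j" using ord_of[OF g _ ij(1)] by auto
    then show "(i,j) \<in> {(a1,a2)}" using conn_single[OF ij(2)] o by auto
  qed
  moreover have "\<not> crossing_partition (part n {(a1,a2)})"
  proof
    assume "crossing_partition (part n {(a1,a2)})"
    then obtain a b c d where abcd: 
      "a < b" "b < c" "c < d" "conn {(a1,a2)} a c" "conn {(a1,a2)} b d"
      by (rule cross_elim)
    then show False using conn_single[OF abcd(4)] conn_single[OF abcd(5)] by auto
  qed
  ultimately show ?thesis unfolding nc_bonds_def by auto
qed

lemma W_nc:
  assumes g: "graph_on n E" and S: "induced_connected n E S"
  shows "{(i,j) \<in> E. i \<in> S \<and> j \<in> S} \<in> nc_bonds n E"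
proof -
  define W where "W = {(i,j) \<in> E. i \<in> S \<and> j \<in> S}"
  have "is_bond n E W"
    unfolding bond_iff[OF g]
  proof (intro conjI allI impI)
    show "W \<subseteq> E" unfolding W_def by auto
    fix i j assume ij: "(i,j) \<in> E" "conn W i j"
    have "i < j" using ord_of[OF g _ ij(1)] by auto
    then show "(i,j) \<in> W" using conn_W[of E S i j] ij unfolding W_def by auto
  qed
  moreover have "\<not> crossing_partition (part n W)"
  proof
    assume "crossing_partition (part n W)"
    then obtain a b c d where abcd: 
      "a < b" "b < c" "c < d" "conn W a c" "conn W b d" "\<not> conn W a b"
      by (rule cross_elim)
    have "a \<in> S" "b \<in> S" using conn_W[of E S a c] conn_W[of E S b d] abcd unfolding W_def by auto
    then have "conn W a b" using S unfolding induced_connected_def W_def by auto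
    then show False using abcd by auto
  qed
  ultimately show ?thesis unfolding nc_bonds_def W_def by auto
qed

lemma lattice_cc:
  assumes g: "graph_on n E" and L: "is_lattice (nc_bonds n E)"
  shows "crossing_closed n E"
  unfolding crossing_closed_def
proof (intro ballI impI)
  fix e f assume e: "e \<in> E" and f: "f \<in> E" and ef: "edges_cross e f"
  obtain a1 a2 where ea: "e = (a1,a2)" by fastforce
  obtain b1 b2 where fb: "f = (b1,b2)" by fastforce
  have r: "a1 \<in> {1..n}" "a2 \<in> {1..n}" "b1 \<in> {1..n}" "b2 \<in> {1..n}"
    using ord_of[OF g _ e[unfolded ea]] ord_of[OF g _ f[unfolded fb]] by auto
  have o: "a1 < a2" "b1 < b2"
    using ord_of[OF g _ e[unfolded ea]] ord_of[OF g _ f[unfolded fb]] by auto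
  obtain Z where Z: "is_lub (nc_bonds n E) {e} {f} Z"
    using L single_nc[OF g e[unfolded ea]] single_nc[OF g f[unfolded fb]] ea fb
    unfolding is_lattice_def by blast
  have Zn: "Z \<in> nc_bonds n E" and eZ: "e \<in> Z" and fZ: "f \<in> Z"
    and Zmin: "\<And>w. w \<in> nc_bonds n E \<Longrightarrow> e \<in> w \<Longrightarrow> f \<in> w \<Longrightarrow> Z \<subseteq> w"
    using Z unfolding is_lub_def by auto
  have ZE: "Z \<subseteq> E" using Zn bond_iff[OF g] unfolding nc_bonds_def by auto
  have ncZ: "\<not> crossing_partition (part n Z)" using Zn unfolding nc_bonds_def by auto
  have cZ: "conn Z a1 a2" "conn Z b1 b2" using eZ fZ ea fb conn_edge by auto
  have ab: "conn Z a1 b1"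
  proof (rule ccontr)
    assume nab: "\<not> conn Z a1 b1"
    have "a1 < b1 \<and> b1 < a2 \<and> a2 < b2 \<or> b1 < a1 \<and> a1 < b2 \<and> b2 < a2"
      using ef ea fb unfolding edges_cross_def by auto
    then have "crossing_partition (part n Z)"
    proof
      assume "a1 < b1 \<and> b1 < a2 \<and> a2 < b2"
      then show ?thesis using cross_intro[of a1 n b1 a2 b2 Z] r cZ nab by auto
    next
      assume "b1 < a1 \<and> a1 < b2 \<and> b2 < a2"
      moreover have "\<not> conn Z b1 a1" using nab conn_sym by metis
      ultimately show ?thesis using cross_intro[of b1 n a1 b2 a2 Z] r cZ by auto
    qed
    then show False using ncZ by auto
  qed
  define C where "C = component n Z a1"
  have Cc: "C \<in> conn_containing n E e f"
  proof -
    have "conn Z a1 a2" "conn Z a1 b1" "conn Z a1 b2" using cZ ab conn_trans by blast+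
    then have "a1 \<in> C" "a2 \<in> C" "b1 \<in> C" "b2 \<in> C" unfolding C_def component_def using r by auto
    then show ?thesis unfolding conn_containing_def C_def using comp_induced[OF g ZE r(1)] ea fb by auto
  qed
  have fin: "finite X" if "X \<in> conn_containing n E e f" for X
  proof -
    have "X \<subseteq> {1..n}" using that unfolding conn_containing_def induced_connected_def by blast
    then show "finite X" using finite_subset by blast
  qed
  obtain S1 where S1: "S1 \<in> conn_containing n E e f" "S1 \<subseteq> C"
    "\<forall>X\<in>conn_containing n E e f. X \<subseteq> S1 \<longrightarrow> X = S1"
    using exists_minimal[OF Cc fin] by blast
  have CS: "C = S" if S: "S \<in> conn_containing n E e f" "\<forall>X\<in>conn_containing n E e f. X \<subseteq> S \<longrightarrow> X = S" for S
  proof -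
    define W where "W = {(i,j) \<in> E. i \<in> S \<and> j \<in> S}"
    have Sind: "induced_connected n E S" and inS: "a1 \<in> S" "a2 \<in> S" "b1 \<in> S" "b2 \<in> S"
      using S(1) ea fb unfolding conn_containing_def by auto
    have Wn: "W \<in> nc_bonds n E" unfolding W_def by (rule W_nc[OF g Sind])
    have "e \<in> W" "f \<in> W" using e f ea fb inS unfolding W_def by auto
    then have ZW: "Z \<subseteq> W" using Zmin Wn by auto
    have "C \<subseteq> S"
    proof
      fix u assume "u \<in> C"
      then have "conn Z a1 u" unfolding C_def component_def by auto
      then have "conn W a1 u" using conn_mono[OF ZW] by auto
      then show "u \<in> S" using conn_W[of E S a1 u] inS unfolding W_def by auto
    qed
    then show "C = S" using S Cc by auto
  qed
  show "crossing_closed_pair n E e f"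
    unfolding crossing_closed_pair_def
  proof (rule ex1I[of _ S1])
    show "S1 \<in> conn_containing n E e f \<and> (\<forall>T\<in>conn_containing n E e f. T \<subseteq> S1 \<longrightarrow> T = S1)"
      using S1 by blast
    fix S assume "S \<in> conn_containing n E e f \<and> (\<forall>T\<in>conn_containing n E e f. T \<subseteq> S \<longrightarrow> T = S)"
    then show "S = S1" using CS S1 by metis
  qed
qed

theorem theorem2p6:
  fixes n :: nat and E :: "(nat \<times> nat) set"
  assumes "graph_on n E"
  shows "(is_lattice (nc_bonds n E) \<longleftrightarrow> crossing_closed n E) \<and>
         (crossing_closed n E \<longrightarrow>
            (\<forall>H\<in>nc_bonds n E. \<forall>H'\<in>nc_bonds n E.
               H \<inter> H' \<in> nc_bonds n E \<and>
               is_glb (nc_bonds n E) H H' (H \<inter> H') \<and>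
               is_glb (bonds n E) H H' (H \<inter> H')))"
proof (intro conjI impI ballI)
  show "is_lattice (nc_bonds n E) \<longleftrightarrow> crossing_closed n E"
    using lattice_cc[OF assms] cc_lattice[OF assms] by blast
next
  fix H H' assume cc: "crossing_closed n E" and H: "H \<in> nc_bonds n E" and H': "H' \<in> nc_bonds n E"
  show i: "H \<inter> H' \<in> nc_bonds n E" by (rule nc_inter[OF assms cc H H'])
  show "is_glb (nc_bonds n E) H H' (H \<inter> H')" by (rule glb_inter[OF i])
  show "is_glb (bonds n E) H H' (H \<inter> H')"
    by (rule glb_inter) (use i in \<open>auto simp: bonds_def nc_bonds_def\<close>)
qed

end
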